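(* Let $q\in Q_{\rm safe}$, $a\in A$, $x\in q$ and $p_v\in\mathcal P_v$, and define $\gamma_{x,a}\in\mathcal D(Q)$ by $\gamma_{x,a}(q'):=T^{a}_{p_v}(q'\mid x)$ for all $q'\in Q$. Then $\gamma_{x,a}\in\Gamma_{q,a}$.
   Context: Fix $n\ge1$, $s\ge1$, $\varepsilon\ge0$. Let $U=\{1,\dots,m\}$ be a finite set of modes, and for each $u\in U$ let $f_u:\mathbb R^n\to\mathbb R^n$ be continuous. $\mathcal D(Y)$ denotes the Borel probability measures on $Y$, and $\mathcal D_s(\mathbb R^n)$ those with finite $s$-th moment. $\mathcal W_s$ is the $s$-Wasserstein distance on $\mathcal D_s(\mathbb R^n)$ induced by the Euclidean norm $\|\cdot\|$. Let $\widehat p_v\in\mathcal D_s(\mathbb R^n)$ be a nominal distribution and set $\mathcal P_v:=\{p\in\mathcal D_s(\mathbb R^n):\mathcal W_s(p,\widehat p_v)\le\varepsilon\}$. For a distribution $p_v$ on $\mathbb R^n$, $u\in U$, $x\in\mathbb R^n$ and Borel $B$, let $T^u_{p_v}(B\mid x):=p_v(\{v: f_u(x)+v\in B\})$. Abstraction. Let $X\subset\mathbb R^n$ be a bounded Borel set and $X_{\rm tgt}\subset X$. Let $Q_{\rm safe}$ be a finite family of pairwise disjoint Borel sets whose union is $X$, each of which is either contained in $X_{\rm tgt}$ or disjoint from it. Let $Q_{\rm tgt}$ be the members of $Q_{\rm safe}$ contained in $X_{\rm tgt}$, let $q_u:=\mathbb R^n\setminus X$, $Q:=Q_{\rm safe}\cup\{q_u\}$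 (a finite partition of $\mathbb R^n$), and $A:=U$. Let $\underline P,\overline P:Q\times A\times Q\to[0,1]$ satisfy $\underline P\le\overline P$ and $\sum_{q'}\underline P(q,a,q')\le1\le\sum_{q'}\overline P(q,a,q')$, with $\underline P(q,a,q')\le\inf_{x\in q}T^a_{\widehat p_v}(q'\mid x)$ and $\overline P(q,a,q')\ge\sup_{x\in q}T^a_{\widehat p_v}(q'\mid x)$ for all $q\in Q_{\rm safe}$, $a\in A$, $q'\in Q$, and $\underline P(q_u,a,q_u)=\overline P(q_u,a,q_u)=1$. Put $\widehat\Gamma_{q,a}:=\{\gamma\in\mathcal D(Q):\underline P(q,a,q')\le\gamma(q')\le\overline P(q,a,q')\ \forall q'\}$. Define the cost $c(q,q'):=\inf\{\|x-y\|^s:x\in q,y\in q'\}$ and, for $\gamma,\gamma'\in\mathcal D(Q)$, $\mathcal T_c(\gamma,\gamma'):=\min_{\pi}\sum_{q,q'}c(q,q')\pi(q,q')$, where the minimum is over couplings $\pi$ of $\gamma$ and $\gamma'$. For $q\in Q_{\rm safe}$ and $a\in A$ let $\Gamma_{q,a}:=\{\gamma\in\mathcal D(Q):\exists\widehat\gamma\in\widehat\Gamma_{q,a},\ \mathcal T_c(\gamma,\widehat\gamma)\le\varepsilon^s\}$, and let $\Gamma_{q_u,a}:=\widehat\Gamma_{q_u,a}$. *)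

theory Defs
  imports "HOL-Probability.Probability"
begin

definition Ds :: "real \<Rightarrow> 'a::euclidean_space measure set" where
  "Ds s = {p. sets p = sets borel \<and> prob_space p \<and>
              (\<integral>\<^sup>+ x. ennreal (norm x powr s) \<partial>p) < \<infinity>}"

definition couplings :: "'a::euclidean_space measure \<Rightarrow> 'a measure \<Rightarrow> ('a \<times> 'a) measure set" where
  "couplings p p' = {\<pi>. sets \<pi> = sets borel \<and> prob_space \<pi> \<and>
                        distr \<pi> borel fst = p \<and> distr \<pi> borel snd = p'}"

definition wasserstein :: "real \<Rightarrow> 'a::euclidean_space measure \<Rightarrow> 'a measure \<Rightarrow> real" where
  "wasserstein s p p' =
     enn2real (INF \<pi>\<in>couplings p p'. \<integral>\<^sup>+ z. ennreal (norm (fst z - snd z) powr s) \<partial>\<pi>) powr (1 / s)"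

definition Pv :: "real \<Rightarrow> real \<Rightarrow> 'a::euclidean_space measure \<Rightarrow> 'a measure set" where
  "Pv s eps phat = {p \<in> Ds s. wasserstein s p phat \<le> eps}"

definition Tk :: "(nat \<Rightarrow> 'a::euclidean_space \<Rightarrow> 'a) \<Rightarrow> nat \<Rightarrow> 'a measure \<Rightarrow> 'a \<Rightarrow> 'a set \<Rightarrow> real" where
  "Tk f u pv x B = measure pv {v. f u x + v \<in> B}"

text \<open>Abstract state set Q = Q_safe together with q_u = complement of X.\<close>
definition Qall :: "'a set \<Rightarrow> 'a set set \<Rightarrow> 'a set set" where
  "Qall X Qsafe = insert (- X) Qsafe"

text \<open>Distributions on a finite set Q (represented as functions, only values on Q matter).\<close>
definition distrs :: "'b set \<Rightarrow> ('b \<Rightarrow> real) set" where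
  "distrs Q = {\<gamma>. (\<forall>q\<in>Q. 0 \<le> \<gamma> q) \<and> (\<Sum>q\<in>Q. \<gamma> q) = 1}"

text \<open>Cost c(q,q') = inf{ |x-y|^s : x \<in> q, y \<in> q'} (with inf of the empty set = +\<infinity>).\<close>
definition cell_cost :: "real \<Rightarrow> 'a::euclidean_space set \<Rightarrow> 'a set \<Rightarrow> ereal" where
  "cell_cost s q q' = (INF z\<in>q \<times> q'. ereal (norm (fst z - snd z) powr s))"

definition fin_couplings :: "'b set \<Rightarrow> ('b \<Rightarrow> real) \<Rightarrow> ('b \<Rightarrow> real) \<Rightarrow> ('b \<times> 'b \<Rightarrow> real) set" where
  "fin_couplings Q \<gamma> \<gamma>' = {\<pi>. (\<forall>q\<in>Q. \<forall>q'\<in>Q. 0 \<le> \<pi> (q, q')) \<and>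
       (\<forall>q\<in>Q. (\<Sum>q'\<in>Q. \<pi> (q, q')) = \<gamma> q) \<and>
       (\<forall>q'\<in>Q. (\<Sum>q\<in>Q. \<pi> (q, q')) = \<gamma>' q')}"

definition OT_cost :: "real \<Rightarrow> 'a::euclidean_space set set \<Rightarrow> ('a set \<Rightarrow> real) \<Rightarrow> ('a set \<Rightarrow> real) \<Rightarrow> ereal" where
  "OT_cost s Q \<gamma> \<gamma>' = (INF \<pi>\<in>fin_couplings Q \<gamma> \<gamma>'.
       (\<Sum>z\<in>Q \<times> Q. cell_cost s (fst z) (snd z) * ereal (\<pi> z)))"

definition hatGamma :: "'b set \<Rightarrow> ('b \<Rightarrow> nat \<Rightarrow> 'b \<Rightarrow> real) \<Rightarrow> ('b \<Rightarrow> nat \<Rightarrow> 'b \<Rightarrow> real)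
    \<Rightarrow> 'b \<Rightarrow> nat \<Rightarrow> ('b \<Rightarrow> real) set" where
  "hatGamma Q Plo Phi q a = {\<gamma> \<in> distrs Q. \<forall>q'\<in>Q. Plo q a q' \<le> \<gamma> q' \<and> \<gamma> q' \<le> Phi q a q'}"

definition Gamma :: "real \<Rightarrow> real \<Rightarrow> 'a::euclidean_space set \<Rightarrow> 'a set set
    \<Rightarrow> ('a set \<Rightarrow> nat \<Rightarrow> 'a set \<Rightarrow> real) \<Rightarrow> ('a set \<Rightarrow> nat \<Rightarrow> 'a set \<Rightarrow> real)
    \<Rightarrow> 'a set \<Rightarrow> nat \<Rightarrow> ('a set \<Rightarrow> real) set" where
  "Gamma s eps X Qsafe Plo Phi q a =
     (if q \<in> Qsafe then
        {\<gamma> \<in> distrs (Qall X Qsafe). \<exists>\<gamma>h \<in> hatGamma (Qall X Qsafe) Plo Phi q a.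
            OT_cost s (Qall X Qsafe) \<gamma> \<gamma>h \<le> ereal (eps powr s)}
      else hatGamma (Qall X Qsafe) Plo Phi q a)"

end

theory Submission imports Defs begin

lemma part_sum:
  fixes Q :: "'b::topological_space set set" and g :: "'c \<Rightarrow> 'b"
  assumes "finite Q" "\<forall>B\<in>Q. B \<in> sets borel" "\<forall>B\<in>Q. \<forall>C\<in>Q. B \<noteq> C \<longrightarrow> B \<inter> C = {}"
    "\<forall>y. \<exists>B\<in>Q. y \<in> B"
    "finite_measure M" "g \<in> borel_measurable M" "E \<in> sets M"
  shows "(\<Sum>B\<in>Q. measure M (g -` B \<inter> E)) = measure M E"
proof -
  have "E = (\<Union>B\<in>Q. g -` B \<inter> E)" using assms(4) by blast
  moreover have "measure M (\<Union>B\<in>Q. g -` B \<inter> E) = (\<Sum>B\<in>Q. measure M (g -` B \<inter> E))"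
  proof (rule measure_finite_Union)
    show "finite Q" by fact
    show "(\<lambda>B. g -` B \<inter> E) ` Q \<subseteq> sets M"
    proof
      fix Z assume "Z \<in> (\<lambda>B. g -` B \<inter> E) ` Q"
      then obtain B where B: "B \<in> Q" "Z = g -` B \<inter> E" by blast
      have "g -` B \<inter> space M \<in> sets M" using assms(2,6) B(1) measurable_sets by blast
      moreover have "Z = (g -` B \<inter> space M) \<inter> E" using B sets.sets_into_space[OF assms(7)] by blast
      ultimately show "Z \<in> sets M" using assms(7) by auto
    qed
    show "disjoint_family_on (\<lambda>B. g -` B \<inter> E) Q"
      using assms(3) unfolding disjoint_family_on_def by blast
    show "\<And>i. i \<in> Q \<Longrightarrow> emeasure M (g -` i \<inter> E) \<noteq> \<infinity>"
      using finite_measure.emeasure_finite[OF assms(5)] by simp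
  qed
  ultimately show ?thesis by simp
qed

lemma coupling_props:
  fixes p p' :: "'a::euclidean_space measure"
  assumes "\<pi> \<in> couplings p p'"
  shows "sets \<pi> = sets (borel \<Otimes>\<^sub>M borel)" "space \<pi> = UNIV" "prob_space \<pi>"
    "fst \<in> measurable \<pi> borel" "snd \<in> measurable \<pi> borel"
    "distr \<pi> borel fst = p" "distr \<pi> borel snd = p'"
proof -
  show s: "sets \<pi> = sets (borel \<Otimes>\<^sub>M borel)" using assms by (subst borel_prod) (simp add: couplings_def)
  show "space \<pi> = UNIV" using sets_eq_imp_space_eq[OF s] by (simp add: space_pair_measure)
  show "prob_space \<pi>" "distr \<pi> borel fst = p" "distr \<pi> borel snd = p'" using assms by (auto simp: couplings_def)
  show "fst \<in> measurable \<pi> borel" "snd \<in> measurable \<pi> borel"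
    using measurable_cong_sets[OF s refl] by auto
qed

lemma coupling_marg_int:
  fixes p p' :: "'a::euclidean_space measure" and g :: "'a \<Rightarrow> ennreal"
  assumes "\<pi> \<in> couplings p p'" "g \<in> borel_measurable borel"
  shows "(\<integral>\<^sup>+ w. g (fst w) \<partial>\<pi>) = (\<integral>\<^sup>+ v. g v \<partial>p)"
    "(\<integral>\<^sup>+ w. g (snd w) \<partial>\<pi>) = (\<integral>\<^sup>+ v. g v \<partial>p')"
proof -
  note cp = coupling_props[OF assms(1)]
  have "(\<integral>\<^sup>+ w. g (fst w) \<partial>\<pi>) = (\<integral>\<^sup>+ v. g v \<partial>(distr \<pi> borel fst))"
    by (rule nn_integral_distr[symmetric]) (use cp assms(2) in auto)
  then show "(\<integral>\<^sup>+ w. g (fst w) \<partial>\<pi>) = (\<integral>\<^sup>+ v. g v \<partial>p)" using cp by simp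
  have "(\<integral>\<^sup>+ w. g (snd w) \<partial>\<pi>) = (\<integral>\<^sup>+ v. g v \<partial>(distr \<pi> borel snd))"
    by (rule nn_integral_distr[symmetric]) (use cp assms(2) in auto)
  then show "(\<integral>\<^sup>+ w. g (snd w) \<partial>\<pi>) = (\<integral>\<^sup>+ v. g v \<partial>p')" using cp by simp
qed

lemma product_coupling:
  fixes p p' :: "'a::euclidean_space measure"
  assumes "sets p = sets borel" "sets p' = sets borel" "prob_space p" "prob_space p'"
  shows "p \<Otimes>\<^sub>M p' \<in> couplings p p'"
proof -
  interpret P: prob_space p by fact
  interpret P': prob_space p' by fact
  interpret PP: pair_prob_space p p' by unfold_locales
  have s: "sets (p \<Otimes>\<^sub>M p') = sets (borel::('a\<times>'a) measure)"
    using sets_pair_measure_cong[OF assms(1,2)] by (subst (asm) borel_prod)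
  have "distr (p \<Otimes>\<^sub>M p') borel fst = distr (p \<Otimes>\<^sub>M p') p fst"
    by (rule distr_cong) (use assms in auto)
  also have "\<dots> = p" by (rule P'.distr_pair_fst)
  finally have f: "distr (p \<Otimes>\<^sub>M p') borel fst = p" .
  have "distr (p \<Otimes>\<^sub>M p') borel snd = distr (p \<Otimes>\<^sub>M p') p' snd"
    by (rule distr_cong) (use assms in auto)
  also have "\<dots> = p'"
  proof (intro measure_eqI)
    fix A assume A: "A \<in> sets (distr (p \<Otimes>\<^sub>M p') p' snd)"
    then have A': "A \<in> sets p'" by simp
    have "emeasure (distr (p \<Otimes>\<^sub>M p') p' snd) A = emeasure (p \<Otimes>\<^sub>M p') (space p \<times> A)"
      using A' by (auto simp add: emeasure_distr space_pair_measure dest: sets.sets_into_space intro!: arg_cong2[where f=emeasure])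
    with A' show "emeasure (distr (p \<Otimes>\<^sub>M p') p' snd) A = emeasure p' A"
      by (simp add: P'.emeasure_pair_measure_Times[OF sets.top[of p] A'] P.emeasure_space_1)
  qed simp
  finally have g: "distr (p \<Otimes>\<^sub>M p') borel snd = p'" .
  show ?thesis unfolding couplings_def using s f g PP.prob_space_axioms by auto
qed

lemma cost_bound:
  fixes u v :: "'a::real_normed_vector" and s :: real
  assumes "s \<ge> 0"
  shows "norm (u - v) powr s \<le> 2 powr s * (norm u powr s + norm v powr s)"
proof -
  have "norm (u - v) \<le> 2 * max (norm u) (norm v)"
    using norm_triangle_ineq4[of u v] by linarith
  then have "norm (u - v) powr s \<le> (2 * max (norm u) (norm v)) powr s"
    by (rule powr_mono2[OF assms norm_ge_zero])
  also have "\<dots> = 2 powr s * max (norm u) (norm v) powr s"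
    by (simp add: powr_mult)
  also have "max (norm u) (norm v) powr s \<le> norm u powr s + norm v powr s"
    by (cases "norm u \<le> norm v") (auto simp: max_def)
  then have "2 powr s * max (norm u) (norm v) powr s \<le> 2 powr s * (norm u powr s + norm v powr s)"
    by (simp add: mult_left_mono)
  finally show ?thesis .
qed

lemma finite_cost:
  fixes p p' :: "'a::euclidean_space measure"
  assumes "p \<in> Ds s" "p' \<in> Ds s" "s \<ge> 0"
  shows "(INF \<pi>\<in>couplings p p'. \<integral>\<^sup>+ z. ennreal (norm (fst z - snd z) powr s) \<partial>\<pi>) < \<infinity>"
proof -
  let ?\<pi> = "p \<Otimes>\<^sub>M p'"
  have c: "?\<pi> \<in> couplings p p'"
    using assms by (intro product_coupling) (auto simp: Ds_def)
  note cp = coupling_props[OF c]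
  have "(\<integral>\<^sup>+ z. ennreal (norm (fst z - snd z) powr s) \<partial>?\<pi>)
      \<le> (\<integral>\<^sup>+ z. ennreal (2 powr s) * (ennreal (norm (fst z) powr s) + ennreal (norm (snd z) powr s)) \<partial>?\<pi>)"
    by (intro nn_integral_mono) (simp add: ennreal_mult[symmetric] ennreal_plus[symmetric] cost_bound assms(3) del: ennreal_plus)
  also have "\<dots> = ennreal (2 powr s) * ((\<integral>\<^sup>+ z. ennreal (norm (fst z) powr s) \<partial>?\<pi>) + (\<integral>\<^sup>+ z. ennreal (norm (snd z) powr s) \<partial>?\<pi>))"
    using cp by (simp add: nn_integral_cmult nn_integral_add)
  also have "\<dots> = ennreal (2 powr s) * ((\<integral>\<^sup>+ v. ennreal (norm v powr s) \<partial>p) + (\<integral>\<^sup>+ v. ennreal (norm v powr s) \<partial>p'))"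
    using coupling_marg_int[OF c, of "\<lambda>v. ennreal (norm v powr s)"] by simp
  also have "\<dots> < \<infinity>"
    using assms by (simp add: Ds_def ennreal_mult_less_top)
  finally have "(\<integral>\<^sup>+ z. ennreal (norm (fst z - snd z) powr s) \<partial>?\<pi>) < \<infinity>" .
  then show ?thesis using c by (meson INF_lower le_less_trans)
qed

theorem proposition1:
  fixes f :: "nat \<Rightarrow> 'a::euclidean_space \<Rightarrow> 'a"
    and m :: nat and s eps :: real
    and phat pv :: "'a measure"
    and X Xtgt :: "'a set" and Qsafe :: "'a set set"
    and Plo Phi :: "'a set \<Rightarrow> nat \<Rightarrow> 'a set \<Rightarrow> real"
    and q :: "'a set" and a :: nat and x :: 'a
  assumes "s \<ge> 1" and "eps \<ge> 0"
    and "\<forall>u\<in>{1..m}. continuous_on UNIV (f u)"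
    and "phat \<in> Ds s"
    and "X \<in> sets borel" and "bounded X" and "Xtgt \<subseteq> X"
    and "finite Qsafe" and "\<forall>B\<in>Qsafe. B \<in> sets borel"
    and "\<forall>B\<in>Qsafe. \<forall>C\<in>Qsafe. B \<noteq> C \<longrightarrow> B \<inter> C = {}"
    and "\<Union>Qsafe = X"
    and "\<forall>B\<in>Qsafe. B \<subseteq> Xtgt \<or> B \<inter> Xtgt = {}"
    and "\<forall>q1\<in>Qall X Qsafe. \<forall>b\<in>{1..m}. \<forall>q2\<in>Qall X Qsafe.
           0 \<le> Plo q1 b q2 \<and> Plo q1 b q2 \<le> Phi q1 b q2 \<and> Phi q1 b q2 \<le> 1"
    and "\<forall>q1\<in>Qall X Qsafe. \<forall>b\<in>{1..m}.
           (\<Sum>q2\<in>Qall X Qsafe. Plo q1 b q2) \<le> 1 \<and> 1 \<le> (\<Sum>q2\<in>Qall X Qsafe. Phi q1 b q2)"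
    and "\<forall>q1\<in>Qsafe. \<forall>b\<in>{1..m}. \<forall>q2\<in>Qall X Qsafe. \<forall>y\<in>q1.
           Plo q1 b q2 \<le> Tk f b phat y q2 \<and> Tk f b phat y q2 \<le> Phi q1 b q2"
    and "\<forall>b\<in>{1..m}. Plo (- X) b (- X) = 1 \<and> Phi (- X) b (- X) = 1"
    and "q \<in> Qsafe" and "a \<in> {1..m}" and "x \<in> q"
    and "pv \<in> Pv s eps phat"
  shows "(\<lambda>q'. Tk f a pv x q') \<in> Gamma s eps X Qsafe Plo Phi q a"
proof -
  define Q where "Q = Qall X Qsafe"
  have Qfin: "finite Q" using assms(8) by (simp add: Q_def Qall_def)
  have Qbor: "\<forall>B\<in>Q. B \<in> sets borel" using assms(5,9) by (auto simp: Q_def Qall_def)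
  have Qdisj: "\<forall>B\<in>Q. \<forall>C\<in>Q. B \<noteq> C \<longrightarrow> B \<inter> C = {}"
    using assms(10,11) by (auto simp: Q_def Qall_def)
  have Qcov: "\<forall>y. \<exists>B\<in>Q. y \<in> B" using assms(11) by (auto simp: Q_def Qall_def)
  have pvD: "pv \<in> Ds s" "wasserstein s pv phat \<le> eps" using assms(20) by (auto simp: Pv_def)
  have pv: "sets pv = sets borel" "prob_space pv" using pvD by (auto simp: Ds_def)
  have ph: "sets phat = sets borel" "prob_space phat" using assms(4) by (auto simp: Ds_def)
  have spv: "space pv = UNIV" using sets_eq_imp_space_eq[OF pv(1)] by simp
  have sph: "space phat = UNIV" using sets_eq_imp_space_eq[OF ph(1)] by simp
  define A where "A B = (\<lambda>v. f a x + v) -` B" for B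
  define \<gamma> where "\<gamma> = (\<lambda>q'. Tk f a pv x q')"
  define \<gamma>h where "\<gamma>h = (\<lambda>q'. Tk f a phat x q')"
  have \<gamma>A: "\<gamma> B = measure pv (A B)" for B by (simp add: \<gamma>_def Tk_def A_def vimage_def)
  have \<gamma>hA: "\<gamma>h B = measure phat (A B)" for B by (simp add: \<gamma>h_def Tk_def A_def vimage_def)
  have addm: "(\<lambda>v. f a x + v) \<in> borel_measurable M" if "sets M = sets borel" for M :: "'a measure"
    unfolding measurable_cong_sets[OF that refl] by measurable
  have sum1: "(\<Sum>B\<in>Q. measure M (A B)) = 1" if "sets M = sets borel" "prob_space M" for M
  proof -
    have sp: "space M = UNIV" using sets_eq_imp_space_eq[OF that(1)] by simp
    have "(\<Sum>B\<in>Q. measure M ((\<lambda>v. f a x + v) -` B \<inter> space M)) = measure M (space M)"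
      by (rule part_sum[OF Qfin Qbor Qdisj Qcov]) (use that addm prob_space.finite_measure in auto)
    then show ?thesis using sp prob_space.prob_space[OF that(2)] by (simp add: A_def)
  qed
  have \<gamma>D: "\<gamma> \<in> distrs Q" using sum1[OF pv] by (simp add: distrs_def \<gamma>A)
  have \<gamma>hD: "\<gamma>h \<in> distrs Q" using sum1[OF ph] by (simp add: distrs_def \<gamma>hA)
  have \<gamma>hH: "\<gamma>h \<in> hatGamma Q Plo Phi q a"
    using \<gamma>hD assms(15,17,18,19) by (auto simp: hatGamma_def \<gamma>h_def Q_def)
  define cost where "cost w = ennreal (norm (fst w - snd w) powr s)" for w :: "'a \<times> 'a"
  define I where "I = (INF \<pi>\<in>couplings pv phat. \<integral>\<^sup>+ z. cost z \<partial>\<pi>)"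
  have Ifin: "I < \<infinity>" unfolding I_def cost_def
    by (rule finite_cost[OF pvD(1) assms(4)]) (use assms(1) in simp)
  have I_eps: "enn2real I \<le> eps powr s"
  proof -
    define r where "r = enn2real I"
    have r0: "r \<ge> 0" by (simp add: r_def)
    have w: "r powr (1 / s) \<le> eps" using pvD(2) by (simp add: wasserstein_def r_def I_def cost_def)
    show ?thesis
    proof (cases "r = 0")
      case True then show ?thesis by (simp add: r_def[symmetric])
    next
      case False
      have "r = (r powr (1 / s)) powr s" using assms(1) r0 by (simp add: powr_powr)
      also have "\<dots> \<le> eps powr s" by (rule powr_mono2) (use assms(1) w in auto)
      finally show ?thesis by (simp add: r_def)
    qed
  qed
  have key1: "OT_cost s Q \<gamma> \<gamma>h \<le> ereal (enn2real (\<integral>\<^sup>+ z. cost z \<partial>\<pi>))"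
    if \<pi>: "\<pi> \<in> couplings pv phat" "(\<integral>\<^sup>+ z. cost z \<partial>\<pi>) < \<infinity>" for \<pi>
  proof -
    note cp = coupling_props[OF \<pi>(1)]
    interpret P: prob_space \<pi> by (rule cp(3))
    have Ab: "A B \<in> sets borel" if "B \<in> Q" for B
    proof -
      have "(\<lambda>v. f a x + v) -` B \<inter> space borel \<in> sets borel"
        using measurable_sets[OF addm[of borel] ] Qbor that by auto
      then show ?thesis by (simp add: A_def)
    qed
    have rect: "S \<times> T \<in> sets \<pi>" if "S \<in> sets borel" "T \<in> sets borel" for S T :: "'a set"
      using cp(1) that by simp
    define R where "R z = A (fst z) \<times> A (snd z)" for z :: "'a set \<times> 'a set"
    define \<pi>Q where "\<pi>Q z = measure \<pi> (R z)" for z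
    have g1: "(\<lambda>w. f a x + snd w) \<in> borel_measurable \<pi>"
      unfolding measurable_cong_sets[OF cp(1) refl] by measurable
    have g2: "(\<lambda>w. f a x + fst w) \<in> borel_measurable \<pi>"
      unfolding measurable_cong_sets[OF cp(1) refl] by measurable
    have fmeas: "finite_measure \<pi>" by (rule P.finite_measure_axioms)
    have \<pi>QC: "\<pi>Q \<in> fin_couplings Q \<gamma> \<gamma>h"
      unfolding fin_couplings_def
    proof (intro CollectI conjI ballI)
      fix q1 assume q1: "q1 \<in> Q"
      have "(\<Sum>q2\<in>Q. \<pi>Q (q1, q2)) = (\<Sum>q2\<in>Q. measure \<pi> ((\<lambda>w. f a x + snd w) -` q2 \<inter> (A q1 \<times> UNIV)))"
        by (intro sum.cong refl) (auto simp: \<pi>Q_def R_def A_def intro!: arg_cong[where f="measure \<pi>"])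
      also have "\<dots> = measure \<pi> (A q1 \<times> UNIV)"
        by (rule part_sum[OF Qfin Qbor Qdisj Qcov fmeas g1]) (use rect Ab q1 in auto)
      also have "\<dots> = measure (distr \<pi> borel fst) (A q1)"
        proof -
          have e: "measure \<pi> (A q1 \<times> UNIV) = measure \<pi> {x. fst x \<in> A q1}" by (rule arg_cong[where f="measure \<pi>"]) auto
          then show ?thesis using measure_distr[OF cp(4) Ab[OF q1]] cp(2) by (simp add: vimage_def)
        qed
      also have "\<dots> = \<gamma> q1" using cp(6) by (simp add: \<gamma>A)
      finally show "(\<Sum>q2\<in>Q. \<pi>Q (q1, q2)) = \<gamma> q1" .
    next
      fix q2 assume q2: "q2 \<in> Q"
      have "(\<Sum>q1\<in>Q. \<pi>Q (q1, q2)) = (\<Sum>q1\<in>Q. measure \<pi> ((\<lambda>w. f a x + fst w) -` q1 \<inter> (UNIV \<times> A q2)))"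
        by (intro sum.cong refl) (auto simp: \<pi>Q_def R_def A_def intro!: arg_cong[where f="measure \<pi>"])
      also have "\<dots> = measure \<pi> (UNIV \<times> A q2)"
        by (rule part_sum[OF Qfin Qbor Qdisj Qcov fmeas g2]) (use rect Ab q2 in auto)
      also have "\<dots> = measure (distr \<pi> borel snd) (A q2)"
        proof -
          have e: "measure \<pi> (UNIV \<times> A q2) = measure \<pi> {x. snd x \<in> A q2}" by (rule arg_cong[where f="measure \<pi>"]) auto
          then show ?thesis using measure_distr[OF cp(5) Ab[OF q2]] cp(2) by (simp add: vimage_def)
        qed
      also have "\<dots> = \<gamma>h q2" using cp(7) by (simp add: \<gamma>hA)
      finally show "(\<Sum>q1\<in>Q. \<pi>Q (q1, q2)) = \<gamma>h q2" .
    qed (simp_all add: \<pi>Q_def)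
    have Rs: "R z \<in> sets \<pi>" if "z \<in> Q \<times> Q" for z
      using that rect Ab by (auto simp: R_def)
    define c where "c z = cell_cost s (fst z) (snd z)" for z :: "'a set \<times> 'a set"
    define cr where "cr z = real_of_ereal (c z)" for z :: "'a set \<times> 'a set"
    have c0: "0 \<le> c z" for z
      unfolding c_def cell_cost_def by (rule INF_greatest) simp
    have cle: "c (q1, q2) \<le> ereal (norm (y1 - y2) powr s)" if "y1 \<in> q1" "y2 \<in> q2" for q1 q2 y1 y2
      unfolding c_def cell_cost_def by (rule INF_lower2[of "(y1, y2)"]) (use that in auto)
    have cr0: "0 \<le> cr z" for z using c0[of z] by (simp add: cr_def real_of_ereal_pos)
    have crle: "cr (q1, q2) \<le> norm (y1 - y2) powr s" if "y1 \<in> q1" "y2 \<in> q2" for q1 q2 y1 y2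
      using cle[OF that] c0[of "(q1,q2)"] unfolding cr_def by (cases "c (q1, q2)") auto
    have tm: "c z * ereal (\<pi>Q z) = ereal (cr z * \<pi>Q z)" for z
    proof (cases "c z = \<infinity>")
      case True
      have "R z = {}"
      proof (rule ccontr)
        assume "R z \<noteq> {}"
        then obtain w where "w \<in> R z" by blast
        then have "f a x + fst w \<in> fst z" "f a x + snd w \<in> snd z" by (auto simp: R_def A_def)
        from cle[OF this] True show False by (cases z) simp
      qed
      then show ?thesis using True by (simp add: \<pi>Q_def cr_def)
    next
      case False
      then have "c z = ereal (cr z)" using c0[of z] unfolding cr_def by (cases "c z") auto
      then show ?thesis by simp
    qed
    have "OT_cost s Q \<gamma> \<gamma>h \<le> (\<Sum>z\<in>Q \<times> Q. cell_cost s (fst z) (snd z) * ereal (\<pi>Q z))"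
      unfolding OT_cost_def by (rule INF_lower[OF \<pi>QC])
    also have "\<dots> = ereal (\<Sum>z\<in>Q \<times> Q. cr z * \<pi>Q z)"
      using tm by (simp add: c_def[symmetric])
    finally have OT: "OT_cost s Q \<gamma> \<gamma>h \<le> ereal (\<Sum>z\<in>Q \<times> Q. cr z * \<pi>Q z)" .
    have "ennreal (\<Sum>z\<in>Q \<times> Q. cr z * \<pi>Q z) = (\<Sum>z\<in>Q \<times> Q. ennreal (cr z * \<pi>Q z))"
      using cr0 by (subst sum_ennreal) (auto simp: \<pi>Q_def)
    also have "\<dots> = (\<Sum>z\<in>Q \<times> Q. \<integral>\<^sup>+ w. ennreal (cr z) * indicator (R z) w \<partial>\<pi>)"
    proof (intro sum.cong refl)
      fix z assume z: "z \<in> Q \<times> Q"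
      show "ennreal (cr z * \<pi>Q z) = (\<integral>\<^sup>+ w. ennreal (cr z) * indicator (R z) w \<partial>\<pi>)"
        using Rs[OF z] cr0[of z] by (simp add: nn_integral_cmult_indicator P.emeasure_eq_measure \<pi>Q_def ennreal_mult)
    qed
    also have "\<dots> = (\<integral>\<^sup>+ w. (\<Sum>z\<in>Q \<times> Q. ennreal (cr z) * indicator (R z) w) \<partial>\<pi>)"
      by (rule nn_integral_sum[symmetric]) (use Rs in auto)
    also have "\<dots> \<le> (\<integral>\<^sup>+ w. cost w \<partial>\<pi>)"
    proof (rule nn_integral_mono)
      fix w :: "'a \<times> 'a"
      obtain q1 where q1: "q1 \<in> Q" "f a x + fst w \<in> q1" using Qcov by blast
      obtain q2 where q2: "q2 \<in> Q" "f a x + snd w \<in> q2" using Qcov by blast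
      have "(\<Sum>z\<in>Q \<times> Q. ennreal (cr z) * indicator (R z) w)
          = (\<Sum>z\<in>Q \<times> Q. if z = (q1, q2) then ennreal (cr (q1, q2)) else 0)"
      proof (intro sum.cong refl)
        fix z assume z: "z \<in> Q \<times> Q"
        have "w \<in> R z \<longleftrightarrow> z = (q1, q2)"
        proof
          assume "w \<in> R z"
          then have "f a x + fst w \<in> fst z" "f a x + snd w \<in> snd z" by (auto simp: R_def A_def)
          then have h1: "f a x + fst w \<in> fst z" and h2: "f a x + snd w \<in> snd z" .
          have z1: "fst z \<in> Q" "snd z \<in> Q" using z by auto
          have "fst z = q1"
          proof (rule ccontr)
            assume "fst z \<noteq> q1"
            then have "fst z \<inter> q1 = {}" using Qdisj z1(1) q1(1) by blast
            then show False using h1 q1(2) by blast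
          qed
          moreover have "snd z = q2"
          proof (rule ccontr)
            assume "snd z \<noteq> q2"
            then have "snd z \<inter> q2 = {}" using Qdisj z1(2) q2(1) by blast
            then show False using h2 q2(2) by blast
          qed
          ultimately show "z = (q1, q2)" by (simp add: prod_eq_iff)
        next
          assume "z = (q1, q2)" then show "w \<in> R z" using q1 q2 by (cases w) (auto simp: R_def A_def)
        qed
        then show "ennreal (cr z) * indicator (R z) w = (if z = (q1, q2) then ennreal (cr (q1, q2)) else 0)"
          by (simp add: indicator_def)
      qed
      also have "\<dots> = ennreal (cr (q1, q2))" using q1(1) q2(1) Qfin by simp
      also have "\<dots> \<le> cost w"
        using crle[OF q1(2) q2(2)] by (simp add: cost_def)
      finally show "(\<Sum>z\<in>Q \<times> Q. ennreal (cr z) * indicator (R z) w) \<le> cost w" .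
    qed
    finally have le: "ennreal (\<Sum>z\<in>Q \<times> Q. cr z * \<pi>Q z) \<le> (\<integral>\<^sup>+ w. cost w \<partial>\<pi>)" .
    have "(\<Sum>z\<in>Q \<times> Q. cr z * \<pi>Q z) \<le> enn2real (\<integral>\<^sup>+ w. cost w \<partial>\<pi>)"
    proof -
      have "enn2real (ennreal (\<Sum>z\<in>Q \<times> Q. cr z * \<pi>Q z)) \<le> enn2real (\<integral>\<^sup>+ w. cost w \<partial>\<pi>)"
        using le \<pi>(2) by (intro enn2real_mono) (auto simp: less_top)
      moreover have "0 \<le> (\<Sum>z\<in>Q \<times> Q. cr z * \<pi>Q z)" using cr0 by (intro sum_nonneg) (simp add: \<pi>Q_def)
      ultimately show ?thesis by simp
    qed
    then show ?thesis using OT by (meson ereal_less_eq(3) order.trans)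
  qed
  have "OT_cost s Q \<gamma> \<gamma>h \<le> ereal (eps powr s)"
  proof (rule ereal_le_epsilon2)
    fix e :: real assume e: "0 < e"
    have "I < I + ennreal e" using Ifin e by (simp add: ennreal_less_top less_le)
    then obtain \<pi> where \<pi>: "\<pi> \<in> couplings pv phat" "(\<integral>\<^sup>+ z. cost z \<partial>\<pi>) < I + ennreal e"
      unfolding I_def by (auto simp: INF_less_iff)
    have fin: "(\<integral>\<^sup>+ z. cost z \<partial>\<pi>) < \<infinity>"
    proof -
      have "I + ennreal e < \<infinity>" using Ifin by (simp add: ennreal_add_eq_top less_top)
      then show ?thesis using \<pi>(2) by (rule less_trans[rotated])
    qed
    have "enn2real (\<integral>\<^sup>+ z. cost z \<partial>\<pi>) \<le> enn2real (I + ennreal e)"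
      using \<pi>(2) Ifin by (intro enn2real_mono) (auto simp: ennreal_add_eq_top less_top)
    also have "\<dots> = enn2real I + e" using Ifin e by (simp add: enn2real_plus less_top)
    finally have "enn2real (\<integral>\<^sup>+ z. cost z \<partial>\<pi>) \<le> eps powr s + e" using I_eps by linarith
    then show "OT_cost s Q \<gamma> \<gamma>h \<le> ereal (eps powr s) + ereal e"
      using key1[OF \<pi>(1) fin] by (metis order.trans ereal_less_eq(3) plus_ereal.simps(1))
  qed
  then show ?thesis
    using \<gamma>D \<gamma>hH assms(17) unfolding Gamma_def Q_def[symmetric] \<gamma>_def[symmetric] by auto
qed

end
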